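(* Let $0<\nu<1$, $0\le\mu<1$ and $n\in\{0,1,2,\dots\}$. Then for every $t>0$, $$\frac{d^n f_{\nu,\mu}(t)}{dt^n}=f_{\nu,\mu-n}(t)=\frac{(-1)^n}{\pi}\int_0^\infty u^{\,n-\mu}\,\exp\!\big(-ut-u^{\nu}\cos(\pi\nu)\big)\,\sin\!\big(u^{\nu}\sin(\pi\nu)+\pi\mu\big)\,du .$$
   Context: For $0<\nu<1$ and real $\rho$, $f_{\nu,\rho}$ denotes the inverse Laplace transform of $s^{-\rho}e^{-s^{\nu}}$, i.e. $f_{\nu,\rho}(t)=\frac{1}{2\pi i}\int_{c-i\infty}^{c+i\infty}e^{st}s^{-\rho}e^{-s^{\nu}}\,ds$ for $t>0$, $c>0$, principal branches (the integral converges absolutely for every real $\rho$). *)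

theory Defs
  imports "HOL-Analysis.Analysis"
begin

text \<open>Inverse Laplace transform of s^(-rho) * exp(-s^nu) along the Bromwich line
  Re s = c, with c = 1 (the value is independent of c > 0).  Substituting
  s = c + i y, ds = i dy, the factor 1/(2 pi i) becomes 1/(2 pi).
  Complex powers use the principal branch (Isabelle's complex powr).\<close>
definition bromwich_f :: "real \<Rightarrow> real \<Rightarrow> real \<Rightarrow> complex" where
  "bromwich_f \<nu> \<rho> t =
     complex_of_real (1 / (2 * pi)) *
     integral UNIV (\<lambda>y::real. exp (Complex 1 y * complex_of_real t)
                              * Complex 1 y powr (- complex_of_real \<rho>)
                              * exp (- (Complex 1 y powr complex_of_real \<nu>)))"

end

theory Submission
  imports Defs "HOL-Complex_Analysis.Complex_Analysis" "HOL-Real_Asymp.Real_Asymp"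
begin

definition GG :: "real \<Rightarrow> real \<Rightarrow> real \<Rightarrow> complex \<Rightarrow> complex" where
  "GG \<nu> \<rho> t s = exp (s * complex_of_real t) * s powr (- complex_of_real \<rho>)
      * exp (- (s powr complex_of_real \<nu>))"

lemma bromwich_GG: "bromwich_f \<nu> \<rho> t = of_real (1/(2*pi)) * integral UNIV (\<lambda>y. GG \<nu> \<rho> t (Complex 1 y))"
  by (simp add: bromwich_f_def GG_def)

lemma Re_powr_real: "s \<noteq> 0 \<Longrightarrow> Re (s powr complex_of_real a) = norm s powr a * cos (a * Arg s)"
  by (simp add: powr_def Re_exp Arg_eq_Im_Ln powr_def[where 'a=real] mult.commute)

lemma norm_GG: "s \<noteq> 0 \<Longrightarrow> norm (GG \<nu> \<rho> t s) =
   exp (t * Re s) * norm s powr (-\<rho>) * exp (- (norm s powr \<nu> * cos (\<nu> * Arg s)))"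
  unfolding GG_def norm_mult norm_exp_eq_Re
  by (simp add: norm_powr_complex Re_powr_real mult.commute)


lemma norm_GG_le: "s \<noteq> 0 \<Longrightarrow> norm (GG \<nu> \<rho> t s) \<le>
   exp (t * Re s) * norm s powr (-\<rho>) * exp (norm s powr \<nu>)"
proof -
  assume s: "s \<noteq> 0"
  have "- (norm s powr \<nu> * cos (\<nu> * Arg s)) \<le> norm s powr \<nu>"
  proof -
    have "norm s powr \<nu> * (- cos (\<nu> * Arg s)) \<le> norm s powr \<nu> * 1"
      by (intro mult_left_mono) auto
    then show ?thesis by simp
  qed
  then show ?thesis unfolding norm_GG[OF s]
    by (intro mult_left_mono) auto
qed

lemma cos_Arg_ge:
  assumes "0 < \<nu>" "\<nu> < 1" "s \<noteq> 0" "0 \<le> Re s"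
  shows "cos (\<nu> * pi / 2) \<le> cos (\<nu> * Arg s)"
proof -
  have a: "\<bar>Arg s\<bar> \<le> pi/2" using Re_Ln_pos_le[OF assms(3)] assms(4) Arg_eq_Im_Ln[OF assms(3)] by simp
  have "cos (\<nu> * Arg s) = cos (\<nu> * \<bar>Arg s\<bar>)"
    by (cases "Arg s \<ge> 0") (auto simp: abs_if)
  also have "cos (\<nu> * pi / 2) \<le> cos (\<nu> * \<bar>Arg s\<bar>)"
  proof (rule cos_monotone_0_pi_le)
    show "0 \<le> \<nu> * \<bar>Arg s\<bar>" using assms by simp
    show "\<nu> * \<bar>Arg s\<bar> \<le> \<nu> * pi / 2" using a assms mult_left_mono[OF a, of \<nu>] by simp
    show "\<nu> * pi / 2 \<le> pi" using assms by (simp add: field_simps)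
  qed
  finally show ?thesis by simp
qed

lemma norm_GG_right:
  assumes "0 < \<nu>" "\<nu> < 1" "0 \<le> Re s" "1 \<le> norm s"
  shows "norm (GG \<nu> \<rho> t s) \<le> exp (t * Re s) * norm s powr \<bar>\<rho>\<bar> * exp (- (cos (\<nu> * pi / 2) * norm s powr \<nu>))"
proof -
  have s: "s \<noteq> 0" using assms by auto
  have c: "cos (\<nu> * pi / 2) \<le> cos (\<nu> * Arg s)" using cos_Arg_ge[OF assms(1,2) s assms(3)] .
  have "norm s powr (-\<rho>) \<le> norm s powr \<bar>\<rho>\<bar>"
    using assms by (intro powr_mono) auto
  moreover have "exp (- (norm s powr \<nu> * cos (\<nu> * Arg s))) \<le> exp (- (cos (\<nu> * pi / 2) * norm s powr \<nu>))"
    using mult_left_mono[OF c, of "norm s powr \<nu>"] by (simp add: mult.commute)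
  ultimately show ?thesis unfolding norm_GG[OF s]
    by (intro mult_mono mult_left_mono) auto
qed

lemma norm_GG_line:
  assumes "0 < \<nu>" "\<nu> < 1"
  shows "norm (GG \<nu> \<rho> t (Complex 1 y)) \<le> exp t * (1 + \<bar>y\<bar>) powr \<bar>\<rho>\<bar> * exp (- (cos (\<nu> * pi / 2) * \<bar>y\<bar> powr \<nu>))"
proof -
  define s where "s = Complex 1 y"
  have n1: "1 \<le> norm s" unfolding s_def cmod_def by simp
  have n2: "\<bar>y\<bar> \<le> norm s" unfolding s_def using abs_Im_le_cmod[of "Complex 1 y"] by simp
  have n3: "norm s \<le> 1 + \<bar>y\<bar>" unfolding s_def using cmod_le[of "Complex 1 y"] by simp
  have c0: "0 < cos (\<nu> * pi / 2)"
  proof (intro cos_gt_zero_pi)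
    have p: "0 < \<nu> * pi" "\<nu> * pi < 1 * pi" using assms by (simp, intro mult_strict_right_mono, auto)
    then show "- (pi / 2) < \<nu> * pi / 2" "\<nu> * pi / 2 < pi / 2" by linarith+
  qed
  have "norm (GG \<nu> \<rho> t s) \<le> exp (t * Re s) * norm s powr \<bar>\<rho>\<bar> * exp (- (cos (\<nu> * pi / 2) * norm s powr \<nu>))"
    using norm_GG_right[OF assms, of s] n1 unfolding s_def by simp
  also have "\<dots> \<le> exp t * (1 + \<bar>y\<bar>) powr \<bar>\<rho>\<bar> * exp (- (cos (\<nu> * pi / 2) * \<bar>y\<bar> powr \<nu>))"
  proof (intro mult_mono)
    show "exp (t * Re s) \<le> exp t" unfolding s_def by simp
    show "norm s powr \<bar>\<rho>\<bar> \<le> (1 + \<bar>y\<bar>) powr \<bar>\<rho>\<bar>" using n1 n3 by (intro powr_mono2) auto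
    have "\<bar>y\<bar> powr \<nu> \<le> norm s powr \<nu>" using n2 assms by (intro powr_mono2) auto
    then show "exp (- (cos (\<nu> * pi / 2) * norm s powr \<nu>)) \<le> exp (- (cos (\<nu> * pi / 2) * \<bar>y\<bar> powr \<nu>))"
      using c0 by (simp add: mult_left_mono)
  qed auto
  finally show ?thesis unfolding s_def .
qed

lemma bound_from_compact:
  fixes f :: "real \<Rightarrow> real"
  assumes "continuous_on {a..b} f"
  obtains M where "M > 0" "\<And>u. u \<in> {a..b} \<Longrightarrow> \<bar>f u\<bar> \<le> M"
proof -
  have "compact (f ` {a..b})" using assms by (intro compact_continuous_image) auto
  then have "bounded (f ` {a..b})" by (rule compact_imp_bounded)
  then obtain M where "M > 0" "\<forall>x\<in>f ` {a..b}. norm x \<le> M" unfolding bounded_pos by blast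
  then show ?thesis using that by auto
qed

lemma int_pos:
  fixes f :: "real \<Rightarrow> real"
  assumes cont: "continuous_on {0<..} f" and a: "a > -1"
    and near0: "\<And>u. 0 < u \<Longrightarrow> u \<le> 1 \<Longrightarrow> \<bar>f u\<bar> \<le> C * u powr a"
    and inf: "((\<lambda>u. u^2 * f u) \<longlongrightarrow> 0) at_top"
  shows "f absolutely_integrable_on {0<..}"
proof -
  have "eventually (\<lambda>u. \<bar>u^2 * f u\<bar> < 1) at_top"
    using inf by (simp add: tendsto_iff dist_real_def)
  then obtain U0 where U0: "\<And>u. u \<ge> U0 \<Longrightarrow> \<bar>u^2 * f u\<bar> < 1" by (auto simp: eventually_at_top_linorder)
  define U where "U = max 1 U0"
  have U1: "U \<ge> 1" unfolding U_def by simp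
  have cU: "continuous_on {1..U} f" using cont by (rule continuous_on_subset) auto
  obtain M where M: "M > 0" "\<And>u. u \<in> {1..U} \<Longrightarrow> \<bar>f u\<bar> \<le> M"
    using bound_from_compact[OF cU] by blast
  define K where "K = max 1 (M * U^2)"
  have bnd: "\<bar>f u\<bar> \<le> K * u powr (-2)" if u: "u \<ge> 1" for u
  proof (cases "u \<le> U")
    case True
    have "\<bar>f u\<bar> \<le> M" using M u True by auto
    also have "M = (M * U^2) * (1 / U^2)" using U1 by simp
    also have "\<dots> \<le> K * (1/u^2)"
      by (intro mult_mono) (use True u U1 M in \<open>auto simp: K_def intro!: divide_left_mono power_mono\<close>)
    also have "1/u^2 = u powr (-2)" using u by (simp add: powr_minus powr_realpow divide_inverse)
    finally show ?thesis .
  next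
    case False
    then have "u \<ge> U0" unfolding U_def by simp
    then have "\<bar>u^2 * f u\<bar> < 1" by (rule U0)
    then have "\<bar>f u\<bar> \<le> 1 / u^2" using u by (simp add: abs_mult field_simps)
    also have "\<dots> \<le> K * (1/u^2)" unfolding K_def
      using mult_right_mono[of 1 "max 1 (M * U\<^sup>2)" "1/u^2"] by simp
    also have "1/u^2 = u powr (-2)" using u by (simp add: powr_minus powr_realpow divide_inverse)
    finally show ?thesis .
  qed
  have i1: "f absolutely_integrable_on {1..}"
  proof (rule measurable_bounded_by_integrable_imp_absolutely_integrable)
    show "f \<in> borel_measurable (lebesgue_on {1..})"
      by (rule continuous_imp_measurable_on_sets_lebesgue) (auto intro: continuous_on_subset[OF cont])
    have ii: "(\<lambda>u::real. u powr (-2)) integrable_on {1..}"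
      using has_integral_powr_to_inf[of "-2" 1] by (auto simp: integrable_on_def)
    show "(\<lambda>u. K * u powr (-2)) integrable_on {1..}" using integrable_on_cmult_left[OF ii] by simp
  qed (use bnd in auto)
  have i2: "f absolutely_integrable_on {0<..1}"
  proof (rule measurable_bounded_by_integrable_imp_absolutely_integrable)
    show "f \<in> borel_measurable (lebesgue_on {0<..1})"
      by (rule continuous_imp_measurable_on_sets_lebesgue) (auto intro: continuous_on_subset[OF cont])
    have ii: "(\<lambda>u. u powr a) integrable_on {0..1}"
      using integrable_on_powr_from_0[of a 1] a by auto
    have "(\<lambda>u. C * u powr a) integrable_on {0..1}" using integrable_on_cmult_left[OF ii] by simp
    then show "(\<lambda>u. C * u powr a) integrable_on {0<..1}"
      by (rule integrable_spike_set) (auto intro: negligible_subset[of "{0}"])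
  qed (use near0 in auto)
  have "f absolutely_integrable_on ({0<..1} \<union> {1..})" by (rule absolutely_integrable_Un[OF i2 i1])
  moreover have "{0<..1} \<union> {1..} = ({0<..} :: real set)" by auto
  ultimately show ?thesis by simp
qed

lemma dom_UNIV:
  assumes c: "c > 0" and nu: "\<nu> > 0"
  shows "(\<lambda>y::real. (1 + \<bar>y\<bar>) powr a * exp (- (c * \<bar>y\<bar> powr \<nu>))) integrable_on UNIV"
proof -
  define D where "D = (\<lambda>y::real. (1 + \<bar>y\<bar>) powr a * exp (- (c * \<bar>y\<bar> powr \<nu>)))"
  have contD: "continuous_on S D" for S
    unfolding D_def using nu by (intro continuous_on_powr' continuous_intros) auto
  obtain M where M: "M > 0" "\<And>u. u \<in> {0..1} \<Longrightarrow> \<bar>D u\<bar> \<le> M"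
    using bound_from_compact[OF contD] by blast
  have pos: "D absolutely_integrable_on {0<..}"
  proof (rule int_pos[of D 0 M])
    show "\<bar>D u\<bar> \<le> M * u powr 0" if "0 < u" "u \<le> 1" for u using M(2)[of u] that by simp
    have "((\<lambda>u. u^2 * ((1 + u) powr a * exp (- (c * u powr \<nu>)))) \<longlongrightarrow> 0) at_top"
      using c nu by real_asymp
    moreover have "eventually (\<lambda>u. u^2 * ((1 + u) powr a * exp (- (c * u powr \<nu>))) = u^2 * D u) at_top"
      using eventually_gt_at_top[of 0] by eventually_elim (simp add: D_def)
    ultimately show "((\<lambda>u. u^2 * D u) \<longlongrightarrow> 0) at_top" by (rule Lim_transform_eventually)
  qed (auto intro: contD)
  have neg: "D absolutely_integrable_on {..<0}"
  proof -
    have "(\<lambda>x. D (-x)) absolutely_integrable_on {..<0} \<and> integral {..<0} (\<lambda>x. D (-x)) = integral {0<..} D \<longleftrightarrow>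
          D absolutely_integrable_on {0<..} \<and> integral {0<..} D = integral {0<..} D"
      by (rule has_absolute_integral_reflect_real) auto
    moreover have "(\<lambda>x. D (-x)) = D" by (auto simp: D_def)
    ultimately show ?thesis using pos by simp
  qed
  have "D integrable_on ({0<..} \<union> {..<0})"
  proof (rule integrable_Un)
    have "{0<..} \<inter> {..<0} = ({} :: real set)" by auto
    then show "negligible ({0<..} \<inter> {..<0::real})" by simp
  qed (use pos neg in \<open>auto simp: absolutely_integrable_on_def\<close>)
  then have "D integrable_on UNIV"
    by (rule integrable_spike_set) (auto intro: negligible_subset[of "{0}"])
  then show ?thesis unfolding D_def .
qed

lemma integral_exhaust:
  fixes f :: "'a::euclidean_space \<Rightarrow> 'b::euclidean_space"
  assumes g: "g integrable_on S" and le: "\<And>x. x \<in> S \<Longrightarrow> norm (f x) \<le> g x"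
    and K: "\<And>n. K n \<subseteq> S" and fK: "\<And>n. f integrable_on K n"
    and ev: "\<And>x. x \<in> S \<Longrightarrow> eventually (\<lambda>n. x \<in> K n) sequentially"
  shows "(\<lambda>n. integral (K n) f) \<longlonglongrightarrow> integral S f" "f integrable_on S"
proof -
  define fk where "fk = (\<lambda>n x. if x \<in> K n then f x else 0)"
  have int: "fk n integrable_on S" for n
    unfolding fk_def integrable_restrict_Int using fK[of n] K[of n] by (simp add: Int_absorb2)
  have eq: "integral S (fk n) = integral (K n) f" for n
    unfolding fk_def integral_restrict_Int using K[of n] by (simp add: Int_absorb2)
  have bnd: "norm (fk n x) \<le> g x" if "x \<in> S" for n x
    using le[OF that] that unfolding fk_def by (auto intro: order_trans[OF norm_ge_zero])
  have conv: "(\<lambda>n. fk n x) \<longlonglongrightarrow> f x" if "x \<in> S" for x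
  proof -
    have "eventually (\<lambda>n. f x = fk n x) sequentially"
      using ev[OF that] by eventually_elim (simp add: fk_def)
    then show ?thesis by (rule Lim_transform_eventually[OF tendsto_const])
  qed
  show "(\<lambda>n. integral (K n) f) \<longlonglongrightarrow> integral S f"
    using dominated_convergence(2)[OF int g bnd conv] by (simp add: eq)
  show "f integrable_on S"
    using dominated_convergence(1)[OF int g bnd conv] .
qed

lemma deriv_integral:
  fixes f f' :: "real \<Rightarrow> real \<Rightarrow> complex" and S :: "real set"
  assumes d: "\<delta> > 0"
    and der: "\<And>x y. x \<in> ball t \<delta> \<Longrightarrow> y \<in> S \<Longrightarrow> ((\<lambda>x. f x y) has_vector_derivative f' x y) (at x)"
    and bnd: "\<And>x y. x \<in> ball t \<delta> \<Longrightarrow> y \<in> S \<Longrightarrow> norm (f' x y) \<le> g y"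
    and g: "g integrable_on S"
    and fi: "\<And>x. x \<in> ball t \<delta> \<Longrightarrow> f x integrable_on S"
    and fi': "f' t integrable_on S"
  shows "((\<lambda>x. integral S (f x)) has_vector_derivative integral S (f' t)) (at t)"
proof -
  define q where "q = (\<lambda>y s. ((f y s - f t s) - (y - t) *\<^sub>R f' t s) /\<^sub>R \<bar>y - t\<bar>)"
  have tb: "t \<in> ball t \<delta>" using d by simp
  have qi: "q y integrable_on S" if "y \<in> ball t \<delta>" for y
    unfolding q_def using fi[OF that] fi[OF tb] fi'
    by (intro integrable_cmul integrable_diff) auto
  have qint: "integral S (q y) = ((integral S (f y) - integral S (f t)) - (y - t) *\<^sub>R integral S (f' t)) /\<^sub>R \<bar>y - t\<bar>"
    if "y \<in> ball t \<delta>" for y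
    unfolding q_def using fi[OF that] fi[OF tb] fi'
    by (simp add: integral_diff integrable_diff integrable_cmul)
  have qb: "norm (q y s) \<le> 2 * g s" if y: "y \<in> ball t \<delta>" "y \<noteq> t" and s: "s \<in> S" for y s
  proof -
    have "norm (f y s - f t s - (y - t) *\<^sub>R f' t s) \<le> norm (y - t) * (2 * g s)"
    proof (rule vector_differentiable_bound_linearization[where f="\<lambda>x. f x s" and f'="\<lambda>x. f' x s" and S="ball t \<delta>" and a=t and b=y and B="2 * g s"])
      show "((\<lambda>x. f x s) has_vector_derivative f' x s) (at x within ball t \<delta>)" if "x \<in> ball t \<delta>" for x
        using der[OF that s] by (rule has_vector_derivative_at_within)
      show "closed_segment t y \<subseteq> ball t \<delta>" using y tb by (intro closed_segment_subset) auto
      show "norm (f' x s - f' t s) \<le> 2 * g s" if "x \<in> ball t \<delta>" for x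
        using bnd[OF that s] bnd[OF tb s] norm_triangle_ineq4[of "f' x s" "f' t s"] by linarith
    qed (use tb in auto)
    moreover have "norm (q y s) = norm (f y s - f t s - (y - t) *\<^sub>R f' t s) / \<bar>y - t\<bar>"
      unfolding q_def by (simp add: divide_inverse mult.commute)
    moreover have "\<bar>y - t\<bar> > 0" using y by simp
    ultimately show ?thesis by (simp add: divide_le_eq mult.commute)
  qed
  have qlim: "((\<lambda>y. q y s) \<longlongrightarrow> 0) (at t)" if s: "s \<in> S" for s
  proof -
    have "((\<lambda>x. f x s) has_derivative (\<lambda>h. h *\<^sub>R f' t s)) (at t)"
      using der[OF tb s] by (simp add: has_vector_derivative_def)
    then have "((\<lambda>y. ((f y s - f t s) - (y - t) *\<^sub>R f' t s) /\<^sub>R norm (y - t)) \<longlongrightarrow> 0) (at t)"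
      unfolding has_derivative_at_within by simp
    then show ?thesis unfolding q_def by simp
  qed
  have lim: "((\<lambda>y. integral S (q y)) \<longlongrightarrow> 0) (at t)"
  proof (subst tendsto_at_iff_sequentially, intro allI impI)
    fix X :: "nat \<Rightarrow> real" assume X: "\<forall>i. X i \<in> UNIV - {t}" and Xt: "X \<longlonglongrightarrow> t"
    have "eventually (\<lambda>n. X n \<in> ball t \<delta>) sequentially"
      using Xt d unfolding tendsto_iff by (auto simp: dist_commute)
    then obtain N where N: "\<And>n. n \<ge> N \<Longrightarrow> X n \<in> ball t \<delta>" by (auto simp: eventually_sequentially)
    have XN: "X (n + N) \<in> ball t \<delta>" "X (n + N) \<noteq> t" for n using N[of "n+N"] X by auto
    have Xa: "filterlim (\<lambda>n. X (n + N)) (at t) sequentially"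
      unfolding filterlim_at using XN Xt by (auto intro: LIMSEQ_ignore_initial_segment)
    have "(\<lambda>n. integral S (q (X (n + N)))) \<longlonglongrightarrow> integral S (\<lambda>s. 0)"
    proof (rule dominated_convergence(2))
      show "q (X (n + N)) integrable_on S" for n using qi XN by auto
      show "(\<lambda>s. 2 * g s) integrable_on S" using g by simp
      show "norm (q (X (n + N)) s) \<le> 2 * g s" if "s \<in> S" for n s using qb XN that by auto
      show "(\<lambda>n. q (X (n + N)) s) \<longlonglongrightarrow> 0" if "s \<in> S" for s
        using filterlim_compose[OF qlim[OF that] Xa] .
    qed
    then show "((\<lambda>y. integral S (q y)) \<circ> X) \<longlonglongrightarrow> 0" unfolding o_def by (simp add: LIMSEQ_offset)
  qed
  have ev: "eventually (\<lambda>y. integral S (q y) = ((integral S (f y) - integral S (f t)) - (y - t) *\<^sub>R integral S (f' t)) /\<^sub>R norm (y - t)) (at t)"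
    using eventually_at_ball[OF d, of t UNIV] by eventually_elim (simp add: qint)
  have "((\<lambda>y. ((integral S (f y) - integral S (f t)) - (y - t) *\<^sub>R integral S (f' t)) /\<^sub>R norm (y - t)) \<longlongrightarrow> 0) (at t)"
    by (rule Lim_transform_eventually[OF lim ev])
  then show ?thesis
    unfolding has_vector_derivative_def has_derivative_at_within
    by (simp add: bounded_linear_scaleR_left)
qed

lemma powr_add_complex: "(s::complex) \<noteq> 0 \<Longrightarrow> s powr (a + b) = s powr a * s powr b"
  by (simp add: powr_def distrib_right exp_add)

lemma cont_GG_line: "continuous_on S (\<lambda>y. GG \<nu> \<rho> t (Complex 1 y))"
  unfolding GG_def
  by (intro continuous_intros continuous_on_powr_complex) (auto simp: continuous_on_Complex complex_eq_iff intro: continuous_intros)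

lemma GG_line_int:
  assumes "0 < \<nu>" "\<nu> < 1"
  shows "(\<lambda>y. GG \<nu> \<rho> t (Complex 1 y)) absolutely_integrable_on UNIV"
proof (rule measurable_bounded_by_integrable_imp_absolutely_integrable)
  show "(\<lambda>y. GG \<nu> \<rho> t (Complex 1 y)) \<in> borel_measurable (lebesgue_on UNIV)"
    by (rule continuous_imp_measurable_on_sets_lebesgue[OF cont_GG_line]) auto
  have c0: "0 < cos (\<nu> * pi / 2)"
  proof (intro cos_gt_zero_pi)
    have p: "0 < \<nu> * pi" "\<nu> * pi < 1 * pi" using assms by (simp, intro mult_strict_right_mono, auto)
    then show "- (pi / 2) < \<nu> * pi / 2" "\<nu> * pi / 2 < pi / 2" by linarith+
  qed
  show "(\<lambda>y. exp t * ((1 + \<bar>y\<bar>) powr \<bar>\<rho>\<bar> * exp (- (cos (\<nu> * pi / 2) * \<bar>y\<bar> powr \<nu>)))) integrable_on UNIV"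
    using integrable_on_cmult_left[OF dom_UNIV[OF c0 assms(1), of "\<bar>\<rho>\<bar>"], of "exp t"] by simp
  show "norm (GG \<nu> \<rho> t (Complex 1 y)) \<le> exp t * ((1 + \<bar>y\<bar>) powr \<bar>\<rho>\<bar> * exp (- (cos (\<nu> * pi / 2) * \<bar>y\<bar> powr \<nu>)))" for y
    using norm_GG_line[OF assms, of \<rho> t y] by (simp add: mult.assoc)
qed auto

lemma GG_deriv_t:
  assumes "s \<noteq> 0"
  shows "((\<lambda>x. GG \<nu> \<rho> x s) has_vector_derivative GG \<nu> (\<rho> - 1) x s) (at x)"
proof -
  define C where "C = s powr (- complex_of_real \<rho>) * exp (- (s powr complex_of_real \<nu>))"
  have "((\<lambda>z. exp (s * z) * C) has_field_derivative (s * exp (s * of_real x) * C)) (at (of_real x))"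
    by (auto intro!: derivative_eq_intros)
  then have der: "((\<lambda>x. exp (s * of_real x) * C) has_vector_derivative (s * exp (s * of_real x) * C)) (at x)"
    by (rule has_vector_derivative_real_field)
  have eq: "s * exp (s * of_real x) * C = GG \<nu> (\<rho> - 1) x s"
  proof -
    have "s powr (- complex_of_real (\<rho> - 1)) = s powr 1 * s powr (- complex_of_real \<rho>)"
      using powr_add_complex[OF assms, of 1 "- complex_of_real \<rho>"] by (simp add: algebra_simps)
    then show ?thesis unfolding GG_def C_def using assms by (simp add: mult_ac)
  qed
  have "(\<lambda>x. GG \<nu> \<rho> x s) = (\<lambda>x. exp (s * of_real x) * C)"
    by (simp add: GG_def C_def fun_eq_iff mult.assoc)
  then show ?thesis using der eq by simp
qed

lemma bromwich_deriv:
  assumes "0 < \<nu>" "\<nu> < 1"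
  shows "((\<lambda>x. bromwich_f \<nu> \<rho> x) has_vector_derivative bromwich_f \<nu> (\<rho> - 1) t) (at t)"
proof -
  have c0: "0 < cos (\<nu> * pi / 2)"
  proof (intro cos_gt_zero_pi)
    have p: "0 < \<nu> * pi" "\<nu> * pi < 1 * pi" using assms by (simp, intro mult_strict_right_mono, auto)
    then show "- (pi / 2) < \<nu> * pi / 2" "\<nu> * pi / 2 < pi / 2" by linarith+
  qed
  have s0: "Complex 1 y \<noteq> 0" for y by (simp add: complex_eq_iff)
  have "((\<lambda>x. integral UNIV (\<lambda>y. GG \<nu> \<rho> x (Complex 1 y))) has_vector_derivative
          integral UNIV (\<lambda>y. GG \<nu> (\<rho> - 1) t (Complex 1 y))) (at t)"
  proof (rule deriv_integral[where \<delta>=1 and g="\<lambda>y. exp (t + 1) * ((1 + \<bar>y\<bar>) powr \<bar>\<rho> - 1\<bar> * exp (- (cos (\<nu> * pi / 2) * \<bar>y\<bar> powr \<nu>)))"])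
    show "((\<lambda>x. GG \<nu> \<rho> x (Complex 1 y)) has_vector_derivative GG \<nu> (\<rho> - 1) x (Complex 1 y)) (at x)" for x y
      by (rule GG_deriv_t[OF s0])
    show "norm (GG \<nu> (\<rho> - 1) x (Complex 1 y)) \<le> exp (t + 1) * ((1 + \<bar>y\<bar>) powr \<bar>\<rho> - 1\<bar> * exp (- (cos (\<nu> * pi / 2) * \<bar>y\<bar> powr \<nu>)))"
      if "x \<in> ball t 1" for x y
    proof -
      have "exp x \<le> exp (t + 1)" using that by (auto simp: dist_real_def)
      then show ?thesis using norm_GG_line[OF assms, of "\<rho> - 1" x y]
        by (smt (verit, best) exp_gt_zero mult_nonneg_nonneg mult_right_mono powr_ge_zero mult.assoc)
    qed
    show "(\<lambda>y. exp (t + 1) * ((1 + \<bar>y\<bar>) powr \<bar>\<rho> - 1\<bar> * exp (- (cos (\<nu> * pi / 2) * \<bar>y\<bar> powr \<nu>)))) integrable_on UNIV"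
      using integrable_on_cmult_left[OF dom_UNIV[OF c0 assms(1), of "\<bar>\<rho> - 1\<bar>"], of "exp (t + 1)"] by simp
    show "(\<lambda>y. GG \<nu> \<rho> x (Complex 1 y)) integrable_on UNIV" for x
      using GG_line_int[OF assms] by (auto simp: absolutely_integrable_on_def)
    show "(\<lambda>y. GG \<nu> (\<rho> - 1) t (Complex 1 y)) integrable_on UNIV"
      using GG_line_int[OF assms] by (auto simp: absolutely_integrable_on_def)
  qed auto
  then show ?thesis unfolding bromwich_GG
    by (intro has_vector_derivative_mult_right) 
qed

lemma cauchy5:
  fixes f :: "complex \<Rightarrow> complex"
  assumes hol: "f holomorphic_on S" and os: "open S" and cs: "convex S"
    and v: "valid_path g1" "valid_path g2" "valid_path g3" "valid_path g4" "valid_path g5"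
    and im: "path_image g1 \<subseteq> S" "path_image g2 \<subseteq> S" "path_image g3 \<subseteq> S" "path_image g4 \<subseteq> S" "path_image g5 \<subseteq> S"
    and e: "pathfinish g1 = pathstart g2" "pathfinish g2 = pathstart g3" "pathfinish g3 = pathstart g4"
       "pathfinish g4 = pathstart g5" "pathfinish g5 = pathstart g1"
  shows "contour_integral g1 f + contour_integral g2 f + contour_integral g3 f + contour_integral g4 f + contour_integral g5 f = 0"
proof -
  define g where "g = g1 +++ g2 +++ g3 +++ g4 +++ g5"
  have ci: "f contour_integrable_on g1" "f contour_integrable_on g2" "f contour_integrable_on g3"
    "f contour_integrable_on g4" "f contour_integrable_on g5"
    using contour_integrable_holomorphic_simple[OF hol os] v im by auto
  have vg: "valid_path g" unfolding g_def using v e by (auto intro!: valid_path_join)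
  have ig: "path_image g \<subseteq> S" unfolding g_def using im e by (auto simp: path_image_join)
  have cg: "pathfinish g = pathstart g" unfolding g_def using e by simp
  have "(f has_contour_integral 0) g" by (rule Cauchy_theorem_convex_simple[OF hol cs vg ig cg])
  then have "contour_integral g f = 0" by (rule contour_integral_unique)
  moreover have "contour_integral g f = contour_integral g1 f + (contour_integral g2 f + (contour_integral g3 f + (contour_integral g4 f + contour_integral g5 f)))"
    unfolding g_def using ci v e by (simp add: valid_path_join)
  ultimately show ?thesis by (simp add: add.assoc)
qed

definition hh :: "real \<Rightarrow> real \<Rightarrow> real \<Rightarrow> real \<Rightarrow> real" where
  "hh \<nu> \<rho> t u = u powr (-\<rho>) * exp (- u * t - u powr \<nu> * cos (pi * \<nu>)) * sin (u powr \<nu> * sin (pi * \<nu>) + pi * \<rho>)"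

lemma GG_neg_exp:
  assumes u: "u > 0"
  shows "GG \<nu> \<rho> t (of_real (-u)) = exp (of_real (- u * t) + of_real (- \<rho> * ln u) + \<i> * of_real (pi * (-\<rho>))
            - of_real (u powr \<nu>) * exp (\<i> * of_real (pi * \<nu>)))"
proof -
  have p1: "complex_of_real (-u) powr (- complex_of_real \<rho>) = exp (of_real (- \<rho> * ln u) + \<i> * of_real (pi * (-\<rho>)))"
  proof -
    have "complex_of_real (-u) powr (- complex_of_real \<rho>) = of_real (u powr (-\<rho>)) * exp (\<i> * pi * (-\<rho>))"
      using powr_of_neg_real[of "-u" "-\<rho>"] u by simp
    also have "of_real (u powr (-\<rho>)) = exp (of_real (- \<rho> * ln u))"
    proof -
      have "u powr (-\<rho>) = exp (- \<rho> * ln u)" using u by (simp add: powr_def)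
      then show ?thesis by (simp only: exp_of_real)
    qed
    finally show ?thesis by (simp add: exp_diff exp_minus divide_inverse mult_ac)
  qed
  have p2: "complex_of_real (-u) powr (complex_of_real \<nu>) = of_real (u powr \<nu>) * exp (\<i> * of_real (pi * \<nu>))"
    using powr_of_neg_real[of "-u" "\<nu>"] u by (simp add: mult_ac)
  show ?thesis unfolding GG_def p1 p2 by (simp add: exp_add exp_diff exp_minus field_simps)
qed

lemma Im_GG_neg:
  assumes u: "u > 0"
  shows "Im (GG \<nu> \<rho> t (of_real (-u))) = - hh \<nu> \<rho> t u"
proof -
  have "Im (GG \<nu> \<rho> t (of_real (-u))) = exp (- u * t - \<rho> * ln u - u powr \<nu> * cos (pi * \<nu>)) * sin (- (pi * \<rho>) - u powr \<nu> * sin (pi * \<nu>))"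
    unfolding GG_neg_exp[OF u] by (simp add: Im_exp Re_exp)
  also have "\<dots> = - hh \<nu> \<rho> t u"
    unfolding hh_def using u
    by (simp add: powr_def exp_diff exp_add exp_minus sin_minus[symmetric] field_simps)
  finally show ?thesis .
qed

lemma Im_GG_pos:
  assumes x: "x > 0"
  shows "Im (GG \<nu> \<rho> t (of_real x)) = 0"
proof -
  have "GG \<nu> \<rho> t (of_real x) = of_real (exp (x * t) * x powr (-\<rho>) * exp (- (x powr \<nu>)))"
    unfolding GG_def using powr_of_real[of x "-\<rho>"] powr_of_real[of x "\<nu>"] x
    by (simp add: exp_of_real[symmetric] del: exp_of_real)
  then show ?thesis by simp
qed

lemma GG_cnj:
  assumes "Re s > 0"
  shows "GG \<nu> \<rho> t (cnj s) = cnj (GG \<nu> \<rho> t s)"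
  unfolding GG_def using assms by (simp add: exp_cnj cnj_powr)

lemma line_sym:
  assumes R: "R \<ge> 0"
  shows "integral {-R..R} (\<lambda>y. GG \<nu> \<rho> t (Complex 1 y)) = of_real (2 * Re (integral {0..R} (\<lambda>y. GG \<nu> \<rho> t (Complex 1 y))))"
proof -
  define F where "F = (\<lambda>y. GG \<nu> \<rho> t (Complex 1 y))"
  have int: "F integrable_on {a..b}" for a b unfolding F_def
    by (intro integrable_continuous_interval cont_GG_line)
  have "integral {-R..R} F = integral {-R..0} F + integral {0..R} F"
    using Henstock_Kurzweil_Integration.integral_combine[where a="-R" and c=0 and b=R and f=F] R int by simp
  also have "integral {-R..0} F = integral {0..R} (\<lambda>y. F (-y))"
    using Henstock_Kurzweil_Integration.integral_reflect_real[where f="\<lambda>y. F (-y)" and a=0 and b=R] by simp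
  also have "(\<lambda>y. F (-y)) = (\<lambda>y. cnj (F y))"
  proof
    fix y
    have "Complex 1 (-y) = cnj (Complex 1 y)" by (simp add: complex_eq_iff)
    then show "F (-y) = cnj (F y)" unfolding F_def by (simp add: GG_cnj)
  qed
  also have "integral {0..R} (\<lambda>y. cnj (F y)) = cnj (integral {0..R} F)"
    by (simp add: integral_cnj)
  also have "cnj (integral {0..R} F) + integral {0..R} F = of_real (2 * Re (integral {0..R} F))"
    by (simp add: complex_eq_iff)
  finally show ?thesis unfolding F_def .
qed

definition Lup :: "complex \<Rightarrow> complex" where
  "Lup s = Ln (- \<i> * s) + \<i> * of_real (pi / 2)"

definition GGup :: "real \<Rightarrow> real \<Rightarrow> real \<Rightarrow> complex \<Rightarrow> complex" where
  "GGup \<nu> \<rho> t s = exp (s * complex_of_real t) * exp (- complex_of_real \<rho> * Lup s)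
      * exp (- exp (complex_of_real \<nu> * Lup s))"

lemma Lup_eq:
  assumes "s \<noteq> 0" "0 \<le> Im s"
  shows "Lup s = Ln s"
proof -
  have z: "- \<i> * s \<noteq> 0" using assms by simp
  have "exp (Lup s) = s" unfolding Lup_def using z
    by (simp add: exp_add exp_Ln)
       (simp add: exp_eq_polar cis_conv_exp[symmetric] cis.ctr complex_eq_iff)
  moreover have "\<bar>Im (Ln (- \<i> * s))\<bar> \<le> pi / 2"
    using Re_Ln_pos_le[OF z] assms by simp
  then have "Im (Ln (- \<i> * s)) \<le> pi / 2" "- Im (Ln (- \<i> * s)) \<le> pi / 2" by linarith+
  moreover have "Im (Lup s) = Im (Ln (- \<i> * s)) + pi / 2" by (simp add: Lup_def)
  ultimately show ?thesis
    by (intro Ln_unique[symmetric]) (use pi_gt_zero in linarith)+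
qed

lemma GGup_eq:
  assumes "s \<noteq> 0" "0 \<le> Im s"
  shows "GGup \<nu> \<rho> t s = GG \<nu> \<rho> t s"
  unfolding GGup_def GG_def Lup_eq[OF assms] using assms by (simp add: powr_def mult.commute)

lemma GG_holo:
  assumes "S \<inter> \<real>\<^sub>\<le>\<^sub>0 = {}"
  shows "GG \<nu> \<rho> t holomorphic_on S"
proof -
  have "(\<lambda>s. exp (s * complex_of_real t) * s powr (- complex_of_real \<rho>) * exp (- (s powr complex_of_real \<nu>))) holomorphic_on S"
    using assms by (intro holomorphic_intros) auto
  then show ?thesis unfolding GG_def[abs_def] .
qed

lemma GGup_holo:
  assumes "\<And>s. s \<in> S \<Longrightarrow> - \<i> * s \<notin> \<real>\<^sub>\<le>\<^sub>0"
  shows "GGup \<nu> \<rho> t holomorphic_on S"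
proof -
  have "(\<lambda>s. exp (s * complex_of_real t) * exp (- complex_of_real \<rho> * (Ln (- \<i> * s) + \<i> * of_real (pi / 2)))
      * exp (- exp (complex_of_real \<nu> * (Ln (- \<i> * s) + \<i> * of_real (pi / 2))))) holomorphic_on S"
    using assms by (intro holomorphic_intros) auto
  then show ?thesis unfolding GGup_def[abs_def] Lup_def .
qed

lemma exp_i_pi2: "exp (\<i> * complex_of_real (pi / 2)) = \<i>"
  by (simp add: exp_eq_polar)
lemma exp_i_pi: "exp (\<i> * complex_of_real pi) = -1"
  by (simp add: exp_eq_polar)

lemma Im_integral: "f integrable_on S \<Longrightarrow> Im (integral S f) = integral S (\<lambda>x. Im (f x))"
  using integral_linear[of f S Im] bounded_linear_Im by (simp add: o_def)

lemma cos_sin_ge1: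
  assumes "0 \<le> x" "x \<le> pi / 2"
  shows "1 \<le> cos x + sin x"
proof -
  have c: "0 \<le> cos x" using assms by (intro cos_ge_zero) auto
  have s: "0 \<le> sin x" using assms by (intro sin_ge_zero) auto
  have "cos x ^ 2 \<le> cos x" using c cos_le_one[of x] by (simp add: power2_eq_square mult_left_le_one_le)
  moreover have "sin x ^ 2 \<le> sin x" using s sin_le_one[of x] by (simp add: power2_eq_square mult_left_le_one_le)
  moreover have "sin x ^ 2 + cos x ^ 2 = 1" by (rule sin_cos_squared_add)
  ultimately show ?thesis by linarith
qed

lemma sin_cos_ge1:
  assumes "pi / 2 \<le> x" "x \<le> pi"
  shows "1 \<le> sin x - cos x"
proof -
  have "1 \<le> cos (pi - x) + sin (pi - x)" using assms by (intro cos_sin_ge1) auto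
  then show ?thesis by (simp add: cos_diff sin_diff)
qed

lemma arc_img:
  assumes "r > 0" "e > 0" "r \<ge> e" and ab: "{a..b} \<subseteq> {0..pi/2} \<or> {a..b} \<subseteq> {pi/2..pi}"
    and "a \<le> b"
    and T: "T = (if {a..b} \<subseteq> {0..pi/2} then {z. inner (Complex 1 1) z > e/2} else {z. inner (Complex (-1) 1) z > e/2 \<and> 0 \<le> Im z})"
  shows "path_image (part_circlepath 0 r a b) \<subseteq> T" "path_image (part_circlepath 0 r b a) \<subseteq> T"
proof -
  have *: "0 + r * cis x \<in> T" if x: "x \<in> {a..b}" for x
  proof (cases "{a..b} \<subseteq> {0..pi/2}")
    case True
    then have "1 \<le> cos x + sin x" using x by (intro cos_sin_ge1) auto
    then have "r * 1 \<le> r * (cos x + sin x)" using assms by (intro mult_left_mono) auto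
    moreover have TT: "T = {z. inner (Complex 1 1) z > e/2}" using T by (simp only: if_P[OF True])
    ultimately show ?thesis using assms by (simp add: inner_complex_def algebra_simps)
  next
    case False
    then have x2: "x \<in> {pi/2..pi}" using ab x by auto
    then have "1 \<le> sin x - cos x" by (intro sin_cos_ge1) auto
    then have "r * 1 \<le> r * (sin x - cos x)" using assms by (intro mult_left_mono) auto
    moreover have "0 \<le> sin x" using x2 by (intro sin_ge_zero) auto
    moreover have TT: "T = {z. inner (Complex (-1) 1) z > e/2 \<and> 0 \<le> Im z}" using T by (simp only: if_not_P[OF False])
    ultimately show ?thesis using assms by (simp add: inner_complex_def algebra_simps)
  qed
  show "path_image (part_circlepath 0 r a b) \<subseteq> T" "path_image (part_circlepath 0 r b a) \<subseteq> T"
    unfolding path_image_part_circlepath' closed_segment_eq_real_ivl using * \<open>a \<le> b\<close>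
    by (auto simp: closed_segment_commute)
qed

lemma contour_identity:
  assumes nu: "0 < \<nu>" "\<nu> < 1" and R: "R \<ge> 2"
  shows "Re (integral {0..R} (\<lambda>y. GG \<nu> \<rho> t (Complex 1 y))) - integral {1/R..R} (hh \<nu> \<rho> t) =
     - Im (contour_integral (linepath (Complex 1 R) (Complex 0 R)) (GG \<nu> \<rho> t)
         + contour_integral (part_circlepath 0 (1/R) (pi/2) 0) (GG \<nu> \<rho> t)
         + contour_integral (part_circlepath 0 R (pi/2) pi) (GG \<nu> \<rho> t)
         + contour_integral (part_circlepath 0 (1/R) pi (pi/2)) (GG \<nu> \<rho> t))"
proof -
  define e where "e = 1 / R"
  have e0: "0 < e" "e \<le> 1/2" using R by (auto simp: e_def field_simps)
  then have e: "0 < e" "e \<le> 1/2" "e < R" "e < 1" using R by auto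
  define S1 where "S1 = {z. inner (Complex 1 1) z > e/2}"
  define S2 where "S2 = {z. inner (Complex (-1) 1) z > e/2}"
  define T2 where "T2 = {z. inner (Complex (-1) 1) z > e/2 \<and> 0 \<le> Im z}"
  have cvx: "convex S1" "convex S2" unfolding S1_def S2_def
    by (rule convex_halfspace_gt)+
  have "convex (S2 \<inter> {z. 0 \<le> Im z})" by (intro convex_Int cvx convex_halfspace_Im_ge)
  moreover have "S2 \<inter> {z. 0 \<le> Im z} = T2" unfolding S2_def T2_def by auto
  ultimately have cvxT2: "convex T2" by simp
  have opn: "open S1" "open S2" unfolding S1_def S2_def by (rule open_halfspace_gt)+
  have T2S2: "T2 \<subseteq> S2" unfolding T2_def S2_def by auto
  let ?G = "GG \<nu> \<rho> t" and ?Gu = "GGup \<nu> \<rho> t"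
  have hol1: "?G holomorphic_on S1"
    by (rule GG_holo) (use e in \<open>auto simp: S1_def complex_nonpos_Reals_iff inner_complex_def\<close>)
  have hol2: "?Gu holomorphic_on S2"
    by (rule GGup_holo) (use e in \<open>auto simp: S2_def complex_nonpos_Reals_iff inner_complex_def\<close>)
  define g1 where "g1 = linepath 1 (Complex 1 R)"
  define g2 where "g2 = linepath (Complex 1 R) (Complex 0 R)"
  define g3 where "g3 = linepath (Complex 0 R) (Complex 0 e)"
  define g4 where "g4 = part_circlepath 0 e (pi/2) 0"
  define g5 where "g5 = linepath (complex_of_real e) 1"
  define k1 where "k1 = linepath (Complex 0 e) (Complex 0 R)"
  define k2 where "k2 = part_circlepath 0 R (pi/2) pi"
  define k3 where "k3 = linepath (complex_of_real (-R)) (complex_of_real (-e))"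
  define k4 where "k4 = part_circlepath 0 e pi (pi/2)"
  define k5 where "k5 = linepath (Complex 0 e) (Complex 0 e)"
  have ei2: "exp (\<i> * complex_of_real pi / 2) = \<i>" using exp_i_pi2 by simp
  have ei: "complex_of_real e * \<i> = Complex 0 e" "complex_of_real R * \<i> = Complex 0 R"
    by (simp_all add: complex_eq_iff)
  have img1: "path_image g4 \<subseteq> S1"
    using arc_img(2)[of e e 0 "pi/2" S1] e unfolding g4_def S1_def by auto
  have img2: "path_image k2 \<subseteq> T2" "path_image k4 \<subseteq> T2"
    using arc_img(1)[of R e "pi/2" pi T2] arc_img(2)[of e e "pi/2" pi T2] e R
    unfolding k2_def k4_def T2_def by auto
  have sum1: "contour_integral g1 ?G + contour_integral g2 ?G + contour_integral g3 ?G
      + contour_integral g4 ?G + contour_integral g5 ?G = 0"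
  proof (rule cauchy5[OF hol1 opn(1) cvx(1)])
    have seg: "\<And>a b. a \<in> S1 \<Longrightarrow> b \<in> S1 \<Longrightarrow> path_image (linepath a b) \<subseteq> S1"
      using closed_segment_subset[OF _ _ cvx(1)] by simp
    show "path_image g1 \<subseteq> S1" "path_image g2 \<subseteq> S1" "path_image g3 \<subseteq> S1" "path_image g5 \<subseteq> S1"
      unfolding g1_def g2_def g3_def g5_def using e R
      by (intro seg; simp add: S1_def inner_complex_def)+
  qed (use img1 ei ei2 in \<open>auto simp: g1_def g2_def g3_def g4_def g5_def exp_i_pi2\<close>)
  have sum2: "contour_integral k1 ?Gu + contour_integral k2 ?Gu + contour_integral k3 ?Gu
      + contour_integral k4 ?Gu + contour_integral k5 ?Gu = 0"
  proof (rule cauchy5[OF hol2 opn(2) cvx(2)])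
    have seg: "\<And>a b. a \<in> S2 \<Longrightarrow> b \<in> S2 \<Longrightarrow> path_image (linepath a b) \<subseteq> S2"
      using closed_segment_subset[OF _ _ cvx(2)] by simp
    show "path_image k1 \<subseteq> S2" "path_image k3 \<subseteq> S2" "path_image k5 \<subseteq> S2"
      unfolding k1_def k3_def k5_def using e R
      by (intro seg; simp add: S2_def inner_complex_def)+
  qed (use img2 T2S2 ei ei2 in \<open>auto simp: k1_def k2_def k3_def k4_def k5_def exp_i_pi2 exp_i_pi\<close>)
  have GuG: "?Gu z = ?G z" if "z \<in> T2" for z
  proof (rule GGup_eq)
    show "z \<noteq> 0" using that e by (auto simp: T2_def)
    show "0 \<le> Im z" using that by (auto simp: T2_def)
  qed
  have segT: "\<And>a b. a \<in> T2 \<Longrightarrow> b \<in> T2 \<Longrightarrow> path_image (linepath a b) \<subseteq> T2"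
    using closed_segment_subset[OF _ _ cvxT2] by simp
  have k13: "path_image k1 \<subseteq> T2" "path_image k3 \<subseteq> T2"
    unfolding k1_def k3_def using e R by (intro segT; simp add: T2_def inner_complex_def)+
  have conv: "contour_integral k ?Gu = contour_integral k ?G" if "path_image k \<subseteq> T2" for k
    by (rule contour_integral_eq) (use that GuG in auto)
  have sum2': "contour_integral k1 ?G + contour_integral k2 ?G + contour_integral k3 ?G
      + contour_integral k4 ?G = 0"
    using sum2 conv[OF k13(1)] conv[OF k13(2)] conv[OF img2(1)] conv[OF img2(2)] by (simp add: k5_def)
  have g3img: "path_image g3 \<subseteq> S1"
    unfolding g3_def using closed_segment_subset[OF _ _ cvx(1)] e R by (simp add: S1_def inner_complex_def)
  have rev: "contour_integral g3 ?G = - contour_integral k1 ?G"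
    unfolding g3_def k1_def
    by (rule contour_integral_reverse_linepath)
       (use g3img holomorphic_on_imp_continuous_on[OF hol1] in \<open>auto simp: g3_def intro: continuous_on_subset\<close>)
  have I1: "contour_integral g1 ?G = \<i> * integral {0..R} (\<lambda>y. ?G (Complex 1 y))"
    unfolding g1_def by (rule contour_integral_linepath_same_Re) (use R in auto)
  have g5img: "path_image g5 \<subseteq> S1"
    unfolding g5_def using closed_segment_subset[OF _ _ cvx(1)] e R by (simp add: S1_def inner_complex_def)
  have ci5: "?G contour_integrable_on g5"
    by (rule contour_integrable_holomorphic_simple[OF hol1 opn(1)]) (use g5img in \<open>auto simp: g5_def\<close>)
  have int5: "(\<lambda>x. ?G (of_real x)) integrable_on {e..1}"
    using ci5 contour_integrable_linepath_Reals_iff[of "complex_of_real e" 1 ?G] e unfolding g5_def by simp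
  have I5: "contour_integral g5 ?G = integral {e..1} (\<lambda>x. ?G (of_real x))"
    unfolding g5_def using contour_integral_linepath_Reals_eq[of "complex_of_real e" 1 ?G] e by simp
  have Im5: "Im (contour_integral g5 ?G) = 0"
  proof -
    have "Im (contour_integral g5 ?G) = integral {e..1} (\<lambda>x. Im (?G (of_real x)))"
      unfolding I5 by (rule Im_integral[OF int5])
    also have "\<dots> = integral {e..1} (\<lambda>x. 0)"
      by (rule integral_cong) (use e in \<open>auto intro: Im_GG_pos\<close>)
    finally show ?thesis by simp
  qed
  have ci3: "?G contour_integrable_on k3"
  proof (rule contour_integrable_eq)
    show "?Gu contour_integrable_on k3"
      by (rule contour_integrable_holomorphic_simple[OF hol2 opn(2)]) (use k13 T2S2 in \<open>auto simp: k3_def\<close>)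
  qed (use k13 GuG in auto)
  have int3: "(\<lambda>x. ?G (of_real x)) integrable_on {-R..-e}"
    using ci3 contour_integrable_linepath_Reals_iff[of "complex_of_real (-R)" "complex_of_real (-e)" ?G] e unfolding k3_def by simp
  have I3: "contour_integral k3 ?G = integral {-R..-e} (\<lambda>x. ?G (of_real x))"
    unfolding k3_def using contour_integral_linepath_Reals_eq[of "complex_of_real (-R)" "complex_of_real (-e)" ?G] e by simp
  have Im3: "Im (contour_integral k3 ?G) = - integral {e..R} (hh \<nu> \<rho> t)"
  proof -
    have int3': "(\<lambda>u. ?G (of_real (-u))) integrable_on {e..R}"
      using int3 Henstock_Kurzweil_Integration.integrable_reflect_real[where f="\<lambda>x. ?G (of_real x)" and a="-R" and b="-e"] by simp
    have "integral {-R..-e} (\<lambda>x. ?G (of_real x)) = integral {e..R} (\<lambda>u. ?G (of_real (-u)))"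
      using Henstock_Kurzweil_Integration.integral_reflect_real[where f="\<lambda>u. ?G (of_real (-u))" and a=e and b=R] by simp
    then have "Im (contour_integral k3 ?G) = integral {e..R} (\<lambda>u. Im (?G (of_real (-u))))"
      unfolding I3 using Im_integral[OF int3'] by simp
    also have "\<dots> = integral {e..R} (\<lambda>u. - hh \<nu> \<rho> t u)"
    proof (rule integral_cong)
      fix u assume "u \<in> {e..R}"
      then have "u > 0" using e by auto
      then show "Im (?G (of_real (-u))) = - hh \<nu> \<rho> t u" by (rule Im_GG_neg)
    qed
    also have "\<dots> = - integral {e..R} (hh \<nu> \<rho> t)" by simp
    finally show ?thesis .
  qed
  have "contour_integral g1 ?G + contour_integral g5 ?G + contour_integral k3 ?G =
     - (contour_integral g2 ?G + contour_integral g4 ?G + contour_integral k2 ?G + contour_integral k4 ?G)"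
  proof -
    let ?a1 = "contour_integral g1 ?G" and ?a2 = "contour_integral g2 ?G" and ?a3 = "contour_integral g3 ?G"
      and ?a4 = "contour_integral g4 ?G" and ?a5 = "contour_integral g5 ?G" and ?b1 = "contour_integral k1 ?G"
      and ?b2 = "contour_integral k2 ?G" and ?b3 = "contour_integral k3 ?G" and ?b4 = "contour_integral k4 ?G"
    have "?a1 + ?a5 + ?b3 + (?a2 + ?a4 + ?b2 + ?b4) = (?a1 + ?a2 + ?a3 + ?a4 + ?a5) + (?b1 + ?b2 + ?b3 + ?b4) - (?a3 + ?b1)"
      by (simp add: algebra_simps)
    also have "\<dots> = 0" using sum1 sum2' rev by simp
    finally show ?thesis using eq_neg_iff_add_eq_0 by blast
  qed
  then have "Im (contour_integral g1 ?G) + Im (contour_integral g5 ?G) + Im (contour_integral k3 ?G) =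
     - Im (contour_integral g2 ?G + contour_integral g4 ?G + contour_integral k2 ?G + contour_integral k4 ?G)"
    by (metis plus_complex.sel(2) uminus_complex.sel(2))
  then show ?thesis unfolding Im5 Im3 I1 by (simp add: e_def g2_def g4_def k2_def k4_def)
qed

lemma GG_cont_upper: "continuous_on {z. 0 \<le> Im z \<and> z \<noteq> 0} (GG \<nu> \<rho> t)"
proof -
  have "GGup \<nu> \<rho> t holomorphic_on {z. - \<i> * z \<notin> \<real>\<^sub>\<le>\<^sub>0}" by (rule GGup_holo) auto
  then have c: "continuous_on {z. - \<i> * z \<notin> \<real>\<^sub>\<le>\<^sub>0} (GGup \<nu> \<rho> t)" by (rule holomorphic_on_imp_continuous_on)
  have sub: "{z. 0 \<le> Im z \<and> z \<noteq> 0} \<subseteq> {z. - \<i> * z \<notin> \<real>\<^sub>\<le>\<^sub>0}"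
    by (auto simp: complex_nonpos_Reals_iff complex_eq_iff)
  show ?thesis
    by (rule continuous_on_eq[OF continuous_on_subset[OF c sub]]) (auto intro: GGup_eq)
qed

lemma arc_pt: "r > 0 \<Longrightarrow> x \<in> path_image (part_circlepath 0 r a b) \<Longrightarrow> \<exists>\<phi>\<in>closed_segment a b. x = of_real r * cis \<phi>"
  unfolding path_image_part_circlepath' by auto

lemma norm_arc_integral:
  assumes r: "r > 0" and ab: "a \<le> b" and cont: "continuous_on (path_image (part_circlepath 0 r a b)) f"
    and B: "\<And>\<phi>. \<phi> \<in> {a..b} \<Longrightarrow> norm (f (of_real r * cis \<phi>)) \<le> B" and B0: "0 \<le> B"
  shows "norm (contour_integral (part_circlepath 0 r a b) f) \<le> B * r * (b - a)"
    "norm (contour_integral (part_circlepath 0 r b a) f) \<le> B * r * (b - a)"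
proof -
  have "f contour_integrable_on (part_circlepath 0 r a b)"
    by (rule contour_integrable_continuous_part_circlepath[OF cont])
  then have hi: "(f has_contour_integral contour_integral (part_circlepath 0 r a b) f) (part_circlepath 0 r a b)"
    by (rule has_contour_integral_integral)
  show 1: "norm (contour_integral (part_circlepath 0 r a b) f) \<le> B * r * (b - a)"
  proof (rule has_contour_integral_bound_part_circlepath[OF hi B0 r ab])
    fix x assume "x \<in> path_image (part_circlepath 0 r a b)"
    then obtain \<phi> where "\<phi> \<in> closed_segment a b" "x = of_real r * cis \<phi>" using arc_pt[OF r] by blast
    then show "norm (f x) \<le> B" using B ab by (auto simp: closed_segment_eq_real_ivl)
  qed
  have "contour_integral (part_circlepath 0 r b a) f = - contour_integral (part_circlepath 0 r a b) f"
    using contour_integral_reversepath[of "part_circlepath 0 r a b" f] by simp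
  then show "norm (contour_integral (part_circlepath 0 r b a) f) \<le> B * r * (b - a)" using 1 by simp
qed

lemma arc_upper:
  assumes r: "r > 0" and ab: "0 \<le> a" "a \<le> pi" "0 \<le> b" "b \<le> pi"
  shows "path_image (part_circlepath 0 r a b) \<subseteq> {z. 0 \<le> Im z \<and> z \<noteq> 0}"
proof
  fix x assume "x \<in> path_image (part_circlepath 0 r a b)"
  then obtain \<phi> where p: "\<phi> \<in> closed_segment a b" "x = of_real r * cis \<phi>" using arc_pt[OF r] by blast
  then have "0 \<le> \<phi>" "\<phi> \<le> pi" using ab by (auto simp: closed_segment_eq_real_ivl split: if_splits)
  then have "0 \<le> sin \<phi>" by (rule sin_ge_zero)
  then show "x \<in> {z. 0 \<le> Im z \<and> z \<noteq> 0}" using p r by simp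
qed

lemma seg_top:
  assumes "z \<in> closed_segment (Complex 1 R) (Complex 0 R)"
  shows "Im z = R" "0 \<le> Re z" "Re z \<le> 1"
proof -
  obtain u where u: "0 \<le> u" "u \<le> 1" "z = (1 - u) *\<^sub>R Complex 1 R + u *\<^sub>R Complex 0 R"
    using assms by (auto simp: in_segment)
  have "Re z = 1 - u" "Im z = R" by (subst u(3), simp add: algebra_simps)+
  then show "Im z = R" "0 \<le> Re z" "Re z \<le> 1" using u by auto
qed

lemma bnd_top:
  assumes nu: "0 < \<nu>" "\<nu> < 1" and R: "R \<ge> 1" and z: "z \<in> closed_segment (Complex 1 R) (Complex 0 R)"
  shows "norm (GG \<nu> \<rho> t z) \<le> exp \<bar>t\<bar> * (R + 1) powr \<bar>\<rho>\<bar> * exp (- (cos (\<nu> * pi / 2) * R powr \<nu>))"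
proof -
  note zz = seg_top[OF z]
  have n1: "R \<le> norm z" using abs_Im_le_cmod[of z] zz R by simp
  have n2: "norm z \<le> R + 1" using cmod_le[of z] zz R by simp
  have c0: "0 < cos (\<nu> * pi / 2)"
  proof (intro cos_gt_zero_pi)
    have p: "0 < \<nu> * pi" "\<nu> * pi < 1 * pi" using nu by (simp, intro mult_strict_right_mono, auto)
    then show "- (pi / 2) < \<nu> * pi / 2" "\<nu> * pi / 2 < pi / 2" by linarith+
  qed
  have "norm (GG \<nu> \<rho> t z) \<le> exp (t * Re z) * norm z powr \<bar>\<rho>\<bar> * exp (- (cos (\<nu> * pi / 2) * norm z powr \<nu>))"
    using norm_GG_right[OF nu, of z \<rho> t] zz n1 R by simp
  also have "\<dots> \<le> exp \<bar>t\<bar> * (R + 1) powr \<bar>\<rho>\<bar> * exp (- (cos (\<nu> * pi / 2) * R powr \<nu>))"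
  proof (intro mult_mono)
    have "t * Re z \<le> \<bar>t\<bar> * Re z" using zz by (intro mult_right_mono) auto
    also have "\<dots> \<le> \<bar>t\<bar> * 1" using zz by (intro mult_left_mono) auto
    finally have "t * Re z \<le> \<bar>t\<bar> * 1" .
    then show "exp (t * Re z) \<le> exp \<bar>t\<bar>" by simp
    show "norm z powr \<bar>\<rho>\<bar> \<le> (R + 1) powr \<bar>\<rho>\<bar>" using n2 by (intro powr_mono2) auto
    have "R powr \<nu> \<le> norm z powr \<nu>" using n1 nu R by (intro powr_mono2) auto
    then show "exp (- (cos (\<nu> * pi / 2) * norm z powr \<nu>)) \<le> exp (- (cos (\<nu> * pi / 2) * R powr \<nu>))"
      using c0 by (simp add: mult_left_mono)
  qed auto
  finally show ?thesis .
qed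

lemma bnd_small:
  assumes t: "t > 0" and e: "0 < e" "e \<le> 1" and nu: "0 < \<nu>"
  shows "norm (GG \<nu> \<rho> t (of_real e * cis \<phi>)) \<le> exp t * e powr (-\<rho>) * exp 1"
proof -
  define z where "z = of_real e * cis \<phi>"
  have nz: "norm z = e" "z \<noteq> 0" using e by (auto simp: z_def norm_mult)
  have "Re z \<le> 1" using complex_Re_le_cmod[of z] nz e by simp
  then have "t * Re z \<le> t * 1" using t by (intro mult_left_mono) auto
  then have a: "exp (t * Re z) \<le> exp t" by simp
  have "e powr \<nu> \<le> 1" using e nu by (intro powr_le1) auto
  then have b: "exp (e powr \<nu>) \<le> exp 1" by simp
  have "norm (GG \<nu> \<rho> t z) \<le> exp (t * Re z) * norm z powr (-\<rho>) * exp (norm z powr \<nu>)"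
    by (rule norm_GG_le[OF nz(2)])
  also have "\<dots> \<le> exp t * e powr (-\<rho>) * exp 1"
    unfolding nz(1) using a b by (intro mult_mono) auto
  finally show ?thesis unfolding z_def .
qed

lemma bnd_big:
  assumes nu: "0 < \<nu>" "\<nu> < 1" and t: "t > 0" and R: "R > 0" and phi: "pi/2 \<le> \<phi>" "\<phi> \<le> pi"
  shows "norm (GG \<nu> \<rho> t (of_real R * cis \<phi>)) \<le>
    R powr (-\<rho>) * (exp (- (cos (\<nu> * pi / (1 + \<nu>)) * R powr \<nu>)) + exp (R powr \<nu> - t * (- cos (pi / (1 + \<nu>))) * R))"
proof -
  define z where "z = of_real R * cis \<phi>"
  define \<phi>0 where "\<phi>0 = pi / (1 + \<nu>)"
  have nz: "norm z = R" "z \<noteq> 0" "Re z = R * cos \<phi>" using R by (auto simp: z_def norm_mult)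
  have "-pi < \<phi>" using phi pi_gt_zero by linarith
  then have "\<phi> \<in> {-pi<..pi}" using phi by auto
  then have "Arg z = \<phi>" unfolding z_def using R by (subst Arg_times_of_real) (auto intro!: Arg_cis)
  then have eq: "norm (GG \<nu> \<rho> t z) = exp (t * (R * cos \<phi>)) * R powr (-\<rho>) * exp (- (R powr \<nu> * cos (\<nu> * \<phi>)))"
    using norm_GG[OF nz(2), of \<nu> \<rho> t] nz by simp
  have p0: "pi / 2 < \<phi>0" "\<phi>0 < pi" unfolding \<phi>0_def using nu pi_gt_zero by (auto simp: field_simps)
  have nphi0: "\<nu> * \<phi>0 < pi / 2" unfolding \<phi>0_def using nu pi_gt_zero by (auto simp: field_simps)
  have nphi0': "\<nu> * pi / (1 + \<nu>) = \<nu> * \<phi>0" unfolding \<phi>0_def by simp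
  define A where "A = exp (- (cos (\<nu> * pi / (1 + \<nu>)) * R powr \<nu>))"
  define B where "B = exp (R powr \<nu> - t * (- cos (pi / (1 + \<nu>))) * R)"
  have "exp (t * (R * cos \<phi>)) * exp (- (R powr \<nu> * cos (\<nu> * \<phi>))) \<le> A + B"
  proof (cases "\<phi> \<le> \<phi>0")
    case True
    have "cos \<phi> \<le> cos (pi/2)" using phi by (intro cos_monotone_0_pi_le) auto
    then have "t * (R * cos \<phi>) \<le> 0" using t R by (simp add: mult_nonneg_nonpos)
    then have a: "exp (t * (R * cos \<phi>)) \<le> 1" by simp
    have "cos (\<nu> * \<phi>0) \<le> cos (\<nu> * \<phi>)"
      using True nu phi nphi0 pi_gt_zero by (intro cos_monotone_0_pi_le) (auto intro: mult_left_mono)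
    then have "R powr \<nu> * cos (\<nu> * \<phi>0) \<le> R powr \<nu> * cos (\<nu> * \<phi>)" by (intro mult_left_mono) auto
    then have b: "exp (- (R powr \<nu> * cos (\<nu> * \<phi>))) \<le> A" unfolding A_def nphi0' by (simp add: mult.commute)
    have "exp (t * (R * cos \<phi>)) * exp (- (R powr \<nu> * cos (\<nu> * \<phi>))) \<le> 1 * A"
      using a b by (intro mult_mono) (auto simp: A_def)
    then show ?thesis unfolding B_def by (smt (verit) exp_gt_zero)
  next
    case False
    have "cos \<phi> \<le> cos \<phi>0" using False phi p0 by (intro cos_monotone_0_pi_le) auto
    then have "t * (R * cos \<phi>) \<le> t * (R * cos \<phi>0)" using t R by (intro mult_left_mono) auto
    then have a: "exp (t * (R * cos \<phi>)) \<le> exp (t * (R * cos \<phi>0))" by simp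
    have "- (R powr \<nu> * cos (\<nu> * \<phi>)) \<le> R powr \<nu>"
      using mult_left_mono[of "- cos (\<nu> * \<phi>)" 1 "R powr \<nu>"] by simp
    then have b: "exp (- (R powr \<nu> * cos (\<nu> * \<phi>))) \<le> exp (R powr \<nu>)" by simp
    have "exp (t * (R * cos \<phi>)) * exp (- (R powr \<nu> * cos (\<nu> * \<phi>))) \<le> exp (t * (R * cos \<phi>0)) * exp (R powr \<nu>)"
      using a b by (intro mult_mono) auto
    also have "\<dots> = B" unfolding B_def \<phi>0_def by (simp add: exp_add[symmetric] algebra_simps)
    finally show ?thesis unfolding A_def by (smt (verit) exp_gt_zero)
  qed
  then have "R powr (-\<rho>) * (exp (t * (R * cos \<phi>)) * exp (- (R powr \<nu> * cos (\<nu> * \<phi>)))) \<le> R powr (-\<rho>) * (A + B)"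
    by (intro mult_left_mono) auto
  then show ?thesis unfolding z_def[symmetric] eq A_def B_def by (simp add: mult_ac)
qed

lemma asym_U:
  fixes a c0 c1 d1 t \<nu> \<rho> :: real
  assumes "0 < c0" "0 < c1" "0 < d1" "0 < t" "0 < \<nu>" "\<nu> < 1" "\<rho> < 1"
  shows "((\<lambda>R. exp t * (R + 1) powr a * exp (- (c0 * R powr \<nu>))
       + 2 * (exp t * (1 / R) powr (-\<rho>) * exp 1 * (1 / R) * (pi / 2))
       + R powr (-\<rho>) * (exp (- (c1 * R powr \<nu>)) + exp (R powr \<nu> - t * d1 * R)) * R * (pi / 2)) \<longlongrightarrow> 0) at_top"
  using assms by real_asymp

lemma est_lim:
  assumes nu: "0 < \<nu>" "\<nu> < 1" and t: "0 < t" and rho: "\<rho> < 1"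
  shows "((\<lambda>R. norm (contour_integral (linepath (Complex 1 R) (Complex 0 R)) (GG \<nu> \<rho> t))
      + norm (contour_integral (part_circlepath 0 (1/R) (pi/2) 0) (GG \<nu> \<rho> t))
      + norm (contour_integral (part_circlepath 0 R (pi/2) pi) (GG \<nu> \<rho> t))
      + norm (contour_integral (part_circlepath 0 (1/R) pi (pi/2)) (GG \<nu> \<rho> t))) \<longlongrightarrow> 0) at_top"
proof -
  define c0 where "c0 = cos (\<nu> * pi / 2)"
  define c1 where "c1 = cos (\<nu> * pi / (1 + \<nu>))"
  define d1 where "d1 = - cos (pi / (1 + \<nu>))"
  have c0: "0 < c0" unfolding c0_def
  proof (intro cos_gt_zero_pi)
    have p: "0 < \<nu> * pi" "\<nu> * pi < 1 * pi" using nu by (simp, intro mult_strict_right_mono, auto)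
    then show "- (pi / 2) < \<nu> * pi / 2" "\<nu> * pi / 2 < pi / 2" by linarith+
  qed
  have c1: "0 < c1" unfolding c1_def
  proof (intro cos_gt_zero_pi)
    show "- (pi / 2) < \<nu> * pi / (1 + \<nu>)" using nu pi_gt_zero
      by (smt (verit) divide_pos_pos mult_pos_pos)
    show "\<nu> * pi / (1 + \<nu>) < pi / 2" using nu pi_gt_zero by (simp add: field_simps)
  qed
  have d1: "0 < d1" unfolding d1_def
  proof -
    have "cos (pi / (1 + \<nu>)) < cos (pi / 2)"
      using nu pi_gt_zero by (intro cos_monotone_0_pi) (auto simp: field_simps)
    then show "0 < - cos (pi / (1 + \<nu>))" by simp
  qed
  define U where "U = (\<lambda>R. exp t * (R + 1) powr \<bar>\<rho>\<bar> * exp (- (c0 * R powr \<nu>))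
       + 2 * (exp t * (1 / R) powr (-\<rho>) * exp 1 * (1 / R) * (pi / 2))
       + R powr (-\<rho>) * (exp (- (c1 * R powr \<nu>)) + exp (R powr \<nu> - t * d1 * R)) * R * (pi / 2))"
  have U: "(U \<longlongrightarrow> 0) at_top" unfolding U_def by (rule asym_U[OF c0 c1 d1 t nu rho])
  let ?G = "GG \<nu> \<rho> t"
  have bnd: "norm (contour_integral (linepath (Complex 1 R) (Complex 0 R)) ?G)
      + norm (contour_integral (part_circlepath 0 (1/R) (pi/2) 0) ?G)
      + norm (contour_integral (part_circlepath 0 R (pi/2) pi) ?G)
      + norm (contour_integral (part_circlepath 0 (1/R) pi (pi/2)) ?G) \<le> U R" if R: "R \<ge> 2" for R
  proof -
    have e: "0 < 1/R" "1/R \<le> 1" using R by auto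
    have contU: "continuous_on {z. 0 \<le> Im z \<and> z \<noteq> 0} ?G" by (rule GG_cont_upper)
    have segU: "closed_segment (Complex 1 R) (Complex 0 R) \<subseteq> {z. 0 \<le> Im z \<and> z \<noteq> 0}"
      using seg_top R by fastforce
    have b1: "norm (contour_integral (linepath (Complex 1 R) (Complex 0 R)) ?G) \<le>
        (exp \<bar>t\<bar> * (R + 1) powr \<bar>\<rho>\<bar> * exp (- (cos (\<nu> * pi / 2) * R powr \<nu>))) * norm (Complex 0 R - Complex 1 R)"
    proof (rule contour_integral_bound_linepath)
      show "?G contour_integrable_on linepath (Complex 1 R) (Complex 0 R)"
        by (rule contour_integrable_continuous_linepath) (rule continuous_on_subset[OF contU segU])
    qed (use bnd_top[OF nu, of R] R in auto)
    have nb: "norm (Complex 0 R - Complex 1 R) = 1" by (simp add: cmod_def)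
    have small: "norm (?G (of_real (1/R) * cis \<phi>)) \<le> exp t * (1/R) powr (-\<rho>) * exp 1" for \<phi>
      by (rule bnd_small[OF t e nu(1)])
    have au1: "path_image (part_circlepath 0 (1/R) 0 (pi/2)) \<subseteq> {z. 0 \<le> Im z \<and> z \<noteq> 0}"
      by (rule arc_upper) (use e in auto)
    have au2: "path_image (part_circlepath 0 (1/R) (pi/2) pi) \<subseteq> {z. 0 \<le> Im z \<and> z \<noteq> 0}"
      by (rule arc_upper) (use e in auto)
    have b2: "norm (contour_integral (part_circlepath 0 (1/R) (pi/2) 0) ?G) \<le> (exp t * (1/R) powr (-\<rho>) * exp 1) * (1/R) * (pi/2 - 0)"
      by (rule norm_arc_integral(2)[OF e(1) _ continuous_on_subset[OF contU au1] small]) auto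
    have b4: "norm (contour_integral (part_circlepath 0 (1/R) pi (pi/2)) ?G) \<le> (exp t * (1/R) powr (-\<rho>) * exp 1) * (1/R) * (pi - pi/2)"
      by (rule norm_arc_integral(2)[OF e(1) _ continuous_on_subset[OF contU au2] small]) auto
    have b3: "norm (contour_integral (part_circlepath 0 R (pi/2) pi) ?G) \<le>
        (R powr (-\<rho>) * (exp (- (c1 * R powr \<nu>)) + exp (R powr \<nu> - t * d1 * R))) * R * (pi - pi/2)"
    proof (rule norm_arc_integral(1))
      show "continuous_on (path_image (part_circlepath 0 R (pi / 2) pi)) ?G"
      proof (rule continuous_on_subset[OF contU])
        show "path_image (part_circlepath 0 R (pi / 2) pi) \<subseteq> {z. 0 \<le> Im z \<and> z \<noteq> 0}"
          by (rule arc_upper) (use R in auto)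
      qed
      show "norm (?G (of_real R * cis \<phi>)) \<le> R powr (-\<rho>) * (exp (- (c1 * R powr \<nu>)) + exp (R powr \<nu> - t * d1 * R))"
        if "\<phi> \<in> {pi/2..pi}" for \<phi>
        using bnd_big[OF nu t, of R \<phi> \<rho>] that R unfolding c1_def d1_def by auto
    qed (use R in auto)
    define P2 where "P2 = exp t * (1 / R) powr (-\<rho>) * exp 1 * (1 / R) * (pi / 2)"
    define P3 where "P3 = R powr (-\<rho>) * (exp (- (c1 * R powr \<nu>)) + exp (R powr \<nu> - t * d1 * R)) * R * (pi / 2)"
    define P1 where "P1 = exp t * (R + 1) powr \<bar>\<rho>\<bar> * exp (- (c0 * R powr \<nu>))"
    have "pi - pi/2 = pi/2" "pi/2 - 0 = pi/2" by simp_all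
    then have b2': "norm (contour_integral (part_circlepath 0 (1/R) (pi/2) 0) ?G) \<le> P2"
      and b4': "norm (contour_integral (part_circlepath 0 (1/R) pi (pi/2)) ?G) \<le> P2"
      and b3': "norm (contour_integral (part_circlepath 0 R (pi/2) pi) ?G) \<le> P3"
      using b2 b4 b3 unfolding P2_def P3_def by (simp_all only:)
    have b1': "norm (contour_integral (linepath (Complex 1 R) (Complex 0 R)) ?G) \<le> P1"
      using b1 nb t unfolding P1_def c0_def by simp
    have "U R = P1 + 2 * P2 + P3" unfolding U_def P1_def P2_def P3_def by simp
    then show ?thesis using b1' b2' b3' b4' by linarith
  qed
  show ?thesis
  proof (rule tendsto_sandwich[OF _ _ tendsto_const U])
    show "eventually (\<lambda>R. 0 \<le> norm (contour_integral (linepath (Complex 1 R) (Complex 0 R)) ?G)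
      + norm (contour_integral (part_circlepath 0 (1/R) (pi/2) 0) ?G)
      + norm (contour_integral (part_circlepath 0 R (pi/2) pi) ?G)
      + norm (contour_integral (part_circlepath 0 (1/R) pi (pi/2)) ?G)) at_top" by simp
    show "eventually (\<lambda>R. norm (contour_integral (linepath (Complex 1 R) (Complex 0 R)) ?G)
      + norm (contour_integral (part_circlepath 0 (1/R) (pi/2) 0) ?G)
      + norm (contour_integral (part_circlepath 0 R (pi/2) pi) ?G)
      + norm (contour_integral (part_circlepath 0 (1/R) pi (pi/2)) ?G) \<le> U R) at_top"
      using eventually_ge_at_top[of 2] by eventually_elim (rule bnd)
  qed
qed

lemma hh_dom_int:
  fixes \<nu> \<rho> t :: real
  assumes nu: "0 < \<nu>" "\<nu> < 1" and t: "0 < t" and rho: "\<rho> < 1"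
  shows "(\<lambda>u::real. u powr (-\<rho>) * exp (u powr \<nu> - u * t)) absolutely_integrable_on {0<..}"
proof (rule int_pos[where a="-\<rho>" and C="exp 1"])
  show "continuous_on {0<..} (\<lambda>u. u powr (-\<rho>) * exp (u powr \<nu> - u * t))"
    by (intro continuous_intros) auto
  show "\<bar>u powr (-\<rho>) * exp (u powr \<nu> - u * t)\<bar> \<le> exp 1 * u powr (-\<rho>)" if "0 < u" "u \<le> 1" for u
  proof -
    have "u powr \<nu> \<le> 1" using that nu by (intro powr_le1) auto
    moreover have "0 \<le> u * t" using that t by simp
    ultimately have "exp (u powr \<nu> - u * t) \<le> exp 1" by simp
    then have "u powr (-\<rho>) * exp (u powr \<nu> - u * t) \<le> u powr (-\<rho>) * exp 1"
      by (intro mult_left_mono) auto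
    then show ?thesis by (simp add: mult.commute)
  qed
  show "((\<lambda>u. u^2 * (u powr (-\<rho>) * exp (u powr \<nu> - u * t))) \<longlongrightarrow> 0) at_top"
    using nu t by real_asymp
qed (use rho in auto)

lemma hh_le:
  assumes "0 < u"
  shows "\<bar>hh \<nu> \<rho> t u\<bar> \<le> u powr (-\<rho>) * exp (u powr \<nu> - u * t)"
proof -
  have "- (u powr \<nu> * cos (pi * \<nu>)) \<le> u powr \<nu>"
    using mult_left_mono[of "- cos (pi * \<nu>)" 1 "u powr \<nu>"] by simp
  then have e: "exp (- u * t - u powr \<nu> * cos (pi * \<nu>)) \<le> exp (u powr \<nu> - u * t)" by simp
  have "\<bar>hh \<nu> \<rho> t u\<bar> = u powr (-\<rho>) * exp (- u * t - u powr \<nu> * cos (pi * \<nu>)) * \<bar>sin (u powr \<nu> * sin (pi * \<nu>) + pi * \<rho>)\<bar>"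
    unfolding hh_def by (simp add: abs_mult)
  also have "\<dots> \<le> u powr (-\<rho>) * exp (u powr \<nu> - u * t) * 1"
    using e by (intro mult_mono) auto
  finally show ?thesis by simp
qed

lemma cont_hh: "continuous_on {0<..} (hh \<nu> \<rho> t)"
  unfolding hh_def[abs_def] by (intro continuous_intros) auto

lemma contour_formula:
  assumes nu: "0 < \<nu>" "\<nu> < 1" and t: "0 < t" and rho: "\<rho> < 1"
  shows "bromwich_f \<nu> \<rho> t = complex_of_real (integral {0<..} (hh \<nu> \<rho> t) / pi)"
proof -
  let ?G = "GG \<nu> \<rho> t"
  let ?h = "hh \<nu> \<rho> t"
  define F where "F = (\<lambda>y. ?G (Complex 1 y))"
  define Rn where "Rn = (\<lambda>n::nat. 2 + real n)"
  have Rn2: "Rn n \<ge> 2" for n unfolding Rn_def by simp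
  have RnT: "filterlim Rn at_top sequentially" unfolding Rn_def
    by (rule filterlim_tendsto_add_at_top[OF tendsto_const filterlim_real_sequentially])
  have Rge: "eventually (\<lambda>n. c \<le> Rn n) sequentially" for c
    using RnT unfolding filterlim_at_top by blast
  have Fint: "F absolutely_integrable_on UNIV" unfolding F_def by (rule GG_line_int[OF nu])
  have lim1: "(\<lambda>n. integral {-Rn n..Rn n} F) \<longlonglongrightarrow> integral UNIV F"
  proof (rule integral_exhaust(1)[where g="\<lambda>y. norm (F y)"])
    show "(\<lambda>y. norm (F y)) integrable_on UNIV" using Fint by (simp add: absolutely_integrable_on_def)
    show "F integrable_on {-Rn n..Rn n}" for n
      unfolding F_def by (rule integrable_continuous_interval[OF cont_GG_line])
    show "eventually (\<lambda>n. x \<in> {-Rn n..Rn n}) sequentially" for x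
      using Rge[of "\<bar>x\<bar>"] by eventually_elim auto
  qed auto
  have Dint: "(\<lambda>u. u powr (-\<rho>) * exp (u powr \<nu> - u * t)) integrable_on {0<..}"
    using hh_dom_int[OF nu t rho] by (simp add: absolutely_integrable_on_def)
  have lim2: "(\<lambda>n. integral {1 / Rn n..Rn n} ?h) \<longlonglongrightarrow> integral {0<..} ?h"
  proof (rule integral_exhaust(1)[OF Dint])
    show "norm (?h x) \<le> x powr (-\<rho>) * exp (x powr \<nu> - x * t)" if "x \<in> {0<..}" for x
      using hh_le[of x \<nu> \<rho> t] that by simp
    show "{1 / Rn n..Rn n} \<subseteq> {0<..}" for n using Rn2[of n] by (auto intro: less_le_trans[of 0 "1 / Rn n"])
    show "?h integrable_on {1 / Rn n..Rn n}" for n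
    proof (rule integrable_continuous_interval, rule continuous_on_subset[OF cont_hh])
      show "{1 / Rn n..Rn n} \<subseteq> {0<..}" using Rn2[of n] by (auto intro: less_le_trans[of 0 "1 / Rn n"])
    qed
    show "eventually (\<lambda>n. x \<in> {1 / Rn n..Rn n}) sequentially" if "x \<in> {0<..}" for x
      using Rge[of "max x (1/x)"]
    proof eventually_elim
      case (elim n)
      have x: "0 < x" using that by simp
      have "1/x \<le> Rn n" using elim by simp
      then have "1 / Rn n \<le> x" using x Rn2[of n] by (simp add: field_simps)
      then show ?case using elim by simp
    qed
  qed
  define A where "A = (\<lambda>n. Re (integral {0..Rn n} F))"
  define H where "H = (\<lambda>n. integral {1 / Rn n..Rn n} ?h)"
  define E where "E = (\<lambda>R. norm (contour_integral (linepath (Complex 1 R) (Complex 0 R)) ?G)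
      + norm (contour_integral (part_circlepath 0 (1/R) (pi/2) 0) ?G)
      + norm (contour_integral (part_circlepath 0 R (pi/2) pi) ?G)
      + norm (contour_integral (part_circlepath 0 (1/R) pi (pi/2)) ?G))"
  have E0: "(\<lambda>n. E (Rn n)) \<longlonglongrightarrow> 0"
    unfolding E_def by (rule filterlim_compose[OF est_lim[OF nu t rho] RnT])
  have AH: "norm (A n - H n) \<le> E (Rn n)" for n
  proof -
    define a where "a = contour_integral (linepath (Complex 1 (Rn n)) (Complex 0 (Rn n))) ?G"
    define b where "b = contour_integral (part_circlepath 0 (1/Rn n) (pi/2) 0) ?G"
    define c where "c = contour_integral (part_circlepath 0 (Rn n) (pi/2) pi) ?G"
    define d where "d = contour_integral (part_circlepath 0 (1/Rn n) pi (pi/2)) ?G"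
    have "A n - H n = - Im (a + b + c + d)"
      unfolding A_def H_def F_def a_def b_def c_def d_def by (rule contour_identity[OF nu Rn2])
    then have "norm (A n - H n) = \<bar>Im (a + b + c + d)\<bar>" by simp
    also have "\<dots> \<le> norm (a + b + c + d)" by (rule abs_Im_le_cmod)
    also have "\<dots> \<le> norm a + norm b + norm c + norm d"
      using norm_triangle_ineq[of "a+b+c" d] norm_triangle_ineq[of "a+b" c] norm_triangle_ineq[of a b] by linarith
    also have "\<dots> = E (Rn n)" unfolding E_def a_def b_def c_def d_def by simp
    finally show ?thesis .
  qed
  have "(\<lambda>n. A n - H n) \<longlonglongrightarrow> 0"
    by (rule Lim_null_comparison[OF _ E0]) (use AH in auto)
  then have "(\<lambda>n. (A n - H n) + H n) \<longlonglongrightarrow> 0 + integral {0<..} ?h"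
    using lim2 unfolding H_def by (intro tendsto_add)
  then have "(\<lambda>n. A n) \<longlonglongrightarrow> integral {0<..} ?h" by simp
  then have l3: "(\<lambda>n. complex_of_real (2 * A n)) \<longlonglongrightarrow> complex_of_real (2 * integral {0<..} ?h)"
    by (intro tendsto_of_real tendsto_mult_left)
  have eqs: "(\<lambda>n. integral {-Rn n..Rn n} F) = (\<lambda>n. complex_of_real (2 * A n))"
  proof
    fix n show "integral {-Rn n..Rn n} F = complex_of_real (2 * A n)"
      unfolding F_def A_def by (rule line_sym) (use Rn2[of n] in auto)
  qed
  have "integral UNIV F = complex_of_real (2 * integral {0<..} ?h)"
    using LIMSEQ_unique[OF lim1[unfolded eqs] l3] .
  then show ?thesis unfolding bromwich_GG F_def[symmetric]
    by (simp add: field_simps)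
qed

lemma sin_shift_n: "sin (y + pi * (\<mu> - real n)) = (-1) ^ n * sin (y + pi * \<mu>)"
proof -
  have "sin (y + pi * (\<mu> - real n)) = sin ((y + pi * \<mu>) - real n * pi)" by (simp add: algebra_simps)
  also have "\<dots> = (-1) ^ n * sin (y + pi * \<mu>)" by (simp add: sin_diff)
  finally show ?thesis .
qed

theorem mainTheorem2:
  fixes \<nu> \<mu> :: real and n :: nat
  assumes "0 < \<nu>" "\<nu> < 1" "0 \<le> \<mu>" "\<mu> < 1"
  shows "(\<forall>k<n. \<forall>t>0. ((\<lambda>x. bromwich_f \<nu> (\<mu> - real k) x)
              has_vector_derivative bromwich_f \<nu> (\<mu> - real (Suc k)) t) (at t))
       \<and> (\<forall>t>0. bromwich_f \<nu> (\<mu> - real n) t =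
            complex_of_real ((-1) ^ n / pi *
              integral {0<..} (\<lambda>u. u powr (real n - \<mu>)
                 * exp (- u * t - u powr \<nu> * cos (pi * \<nu>))
                 * sin (u powr \<nu> * sin (pi * \<nu>) + pi * \<mu>))))"
proof (intro conjI allI impI)
  fix k t assume "k < n" "(0::real) < t"
  have e: "\<mu> - real (Suc k) = (\<mu> - real k) - 1" by simp
  show "((\<lambda>x. bromwich_f \<nu> (\<mu> - real k) x) has_vector_derivative bromwich_f \<nu> (\<mu> - real (Suc k)) t) (at t)"
    unfolding e by (rule bromwich_deriv[OF assms(1,2)])
next
  fix t :: real assume t: "0 < t"
  have rho: "\<mu> - real n < 1" using assms by simp
  have "hh \<nu> (\<mu> - real n) t = (\<lambda>u. (-1) ^ n * (u powr (real n - \<mu>)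
                 * exp (- u * t - u powr \<nu> * cos (pi * \<nu>))
                 * sin (u powr \<nu> * sin (pi * \<nu>) + pi * \<mu>)))"
    by (rule ext) (simp add: hh_def sin_shift_n mult_ac)
  then have "integral {0<..} (hh \<nu> (\<mu> - real n) t) = (-1) ^ n * integral {0<..} (\<lambda>u. u powr (real n - \<mu>)
                 * exp (- u * t - u powr \<nu> * cos (pi * \<nu>))
                 * sin (u powr \<nu> * sin (pi * \<nu>) + pi * \<mu>))"
    using integral_cmul[where c="(-1) ^ n" and S="{0<..}" and f="\<lambda>u. u powr (real n - \<mu>)
                 * exp (- u * t - u powr \<nu> * cos (pi * \<nu>))
                 * sin (u powr \<nu> * sin (pi * \<nu>) + pi * \<mu>)"] by simp
  then show "bromwich_f \<nu> (\<mu> - real n) t =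
            complex_of_real ((-1) ^ n / pi *
              integral {0<..} (\<lambda>u. u powr (real n - \<mu>)
                 * exp (- u * t - u powr \<nu> * cos (pi * \<nu>))
                 * sin (u powr \<nu> * sin (pi * \<nu>) + pi * \<mu>)))"
    using contour_formula[OF assms(1,2) t rho] by simp
qed

end
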